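(* Let $G$ be a finite GVZ-group with $|\mathrm{cd}(G)|=2$, and let $\phi,\chi\in\mathrm{nl}(G)$. If $[Z(\phi),G]\subseteq\ker\chi$, then $Z(\phi)=Z(\chi)$.
   Context: All groups are finite. $\mathrm{Irr}(G)$ is the set of complex irreducible characters of $G$, $\mathrm{nl}(G)$ the set of non-linear irreducible characters, and $\mathrm{cd}(G)=\{\chi(1):\chi\in\mathrm{Irr}(G)\}$. For a character $\chi$, $Z(\chi)=\{g\in G: |\chi(g)|=\chi(1)\}$. A nonabelian group $G$ is a GVZ-group if for every $\chi\in\mathrm{Irr}(G)$ we have $\chi(g)=0$ for all $g\in G\setminus Z(\chi)$. *)

theory Defs
  imports "HOL-Algebra.Algebra" "Jordan_Normal_Form.Matrix" "HOL-Library.FuncSet"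
begin

definition is_rep :: "('g, 'b) monoid_scheme \<Rightarrow> nat \<Rightarrow> ('g \<Rightarrow> complex mat) \<Rightarrow> bool" where
  "is_rep G n \<rho> \<longleftrightarrow> n > 0 \<and> (\<forall>g\<in>carrier G. \<rho> g \<in> carrier_mat n n)
     \<and> \<rho> \<one>\<^bsub>G\<^esub> = 1\<^sub>m n
     \<and> (\<forall>g\<in>carrier G. \<forall>h\<in>carrier G. \<rho> (g \<otimes>\<^bsub>G\<^esub> h) = \<rho> g * \<rho> h)"

definition is_subspace :: "nat \<Rightarrow> complex vec set \<Rightarrow> bool" where
  "is_subspace n W \<longleftrightarrow> W \<subseteq> carrier_vec n \<and> 0\<^sub>v n \<in> W
     \<and> (\<forall>v\<in>W. \<forall>w\<in>W. v + w \<in> W) \<and> (\<forall>c. \<forall>v\<in>W. c \<cdot>\<^sub>v v \<in> W)"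

definition is_irr_rep :: "('g, 'b) monoid_scheme \<Rightarrow> nat \<Rightarrow> ('g \<Rightarrow> complex mat) \<Rightarrow> bool" where
  "is_irr_rep G n \<rho> \<longleftrightarrow> is_rep G n \<rho> \<and>
     (\<forall>W. is_subspace n W \<and> (\<forall>g\<in>carrier G. \<forall>w\<in>W. \<rho> g *\<^sub>v w \<in> W)
          \<longrightarrow> W = {0\<^sub>v n} \<or> W = carrier_vec n)"

definition mat_trace :: "complex mat \<Rightarrow> complex" where
  "mat_trace A = (\<Sum>i<dim_row A. A $$ (i, i))"

definition Irr :: "('g, 'b) monoid_scheme \<Rightarrow> ('g \<Rightarrow> complex) set" where
  "Irr G = {\<chi>. \<exists>n \<rho>. is_irr_rep G n \<rho> \<and> \<chi> = (\<lambda>g\<in>carrier G. mat_trace (\<rho> g))}"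

definition nl :: "('g, 'b) monoid_scheme \<Rightarrow> ('g \<Rightarrow> complex) set" where
  "nl G = {\<chi>\<in>Irr G. \<chi> \<one>\<^bsub>G\<^esub> \<noteq> 1}"

definition cd :: "('g, 'b) monoid_scheme \<Rightarrow> complex set" where
  "cd G = {\<chi> \<one>\<^bsub>G\<^esub> | \<chi>. \<chi> \<in> Irr G}"

definition Zchar :: "('g, 'b) monoid_scheme \<Rightarrow> ('g \<Rightarrow> complex) \<Rightarrow> 'g set" where
  "Zchar G \<chi> = {g\<in>carrier G. cmod (\<chi> g) = cmod (\<chi> \<one>\<^bsub>G\<^esub>)}"

definition ker_char :: "('g, 'b) monoid_scheme \<Rightarrow> ('g \<Rightarrow> complex) \<Rightarrow> 'g set" where
  "ker_char G \<chi> = {g\<in>carrier G. \<chi> g = \<chi> \<one>\<^bsub>G\<^esub>}"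

definition comm_subgroup :: "('g, 'b) monoid_scheme \<Rightarrow> 'g set \<Rightarrow> 'g set \<Rightarrow> 'g set" where
  "comm_subgroup G A B = generate G
     {inv\<^bsub>G\<^esub> a \<otimes>\<^bsub>G\<^esub> inv\<^bsub>G\<^esub> b \<otimes>\<^bsub>G\<^esub> a \<otimes>\<^bsub>G\<^esub> b | a b. a \<in> A \<and> b \<in> B}"

definition GVZ :: "('g, 'b) monoid_scheme \<Rightarrow> bool" where
  "GVZ G \<longleftrightarrow> group G \<and> \<not> comm_group G \<and>
     (\<forall>\<chi>\<in>Irr G. \<forall>g\<in>carrier G - Zchar G \<chi>. \<chi> g = 0)"

end

theory Submission
  imports Defs "Jordan_Normal_Form.Spectral_Radius" "Jordan_Normal_Form.Schur_Decomposition"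
begin


lemma mult_entry:
  assumes "A \<in> carrier_mat n m" "B \<in> carrier_mat m p" "i < n" "j < p"
  shows "(A * B) $$ (i,j) = (\<Sum>k<m. A $$ (i,k) * B $$ (k,j))"
  using assms by (simp add: index_mult_mat scalar_prod_def lessThan_atLeast0)

lemma sum_single:
  fixes f :: "nat \<Rightarrow> 'a::comm_monoid_add"
  assumes "i < n" "\<And>l. l < n \<Longrightarrow> l \<noteq> i \<Longrightarrow> f l = 0"
  shows "(\<Sum>l<n. f l) = f i"
proof -
  have "(\<Sum>l<n. f l) = f i + (\<Sum>l\<in>{..<n} - {i}. f l)"
    using assms(1) by (simp add: sum.remove)
  also have "(\<Sum>l\<in>{..<n} - {i}. f l) = 0" using assms(2) by (intro sum.neutral) auto
  finally show ?thesis by simp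
qed

lemma mat_trace_eq: "A \<in> carrier_mat n n \<Longrightarrow> mat_trace A = (\<Sum>i<n. A $$ (i,i))"
  unfolding mat_trace_def by auto

lemma mat_trace_mult_comm:
  assumes A: "A \<in> carrier_mat n n" and B: "B \<in> carrier_mat n n"
  shows "mat_trace (A * B) = mat_trace (B * A)"
proof -
  have "mat_trace (A * B) = (\<Sum>i<n. \<Sum>j<n. A $$ (i,j) * B $$ (j,i))"
    using A B by (simp add: mat_trace_eq[of _ n] mult_entry[OF A B] del: index_mult_mat)
  also have "\<dots> = (\<Sum>j<n. \<Sum>i<n. B $$ (j,i) * A $$ (i,j))"
    by (subst sum.swap) (simp add: mult.commute)
  also have "\<dots> = mat_trace (B * A)"
    using A B by (simp add: mat_trace_eq[of _ n] mult_entry[OF B A] del: index_mult_mat)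
  finally show ?thesis .
qed

lemma mat_trace_one: "mat_trace (1\<^sub>m n) = of_nat n"
  by (simp add: mat_trace_def)

lemma mat_trace_similar:
  assumes "similar_mat_wit A B P Q" "A \<in> carrier_mat n n"
  shows "mat_trace A = mat_trace B"
proof -
  from assms have c: "B \<in> carrier_mat n n" "P \<in> carrier_mat n n" "Q \<in> carrier_mat n n"
    and QP: "Q * P = 1\<^sub>m n" and A: "A = P * B * Q"
    unfolding similar_mat_wit_def Let_def by auto
  have "mat_trace A = mat_trace (P * (B * Q))" using A c by (simp add: assoc_mult_mat)
  also have "\<dots> = mat_trace ((B * Q) * P)" using c by (intro mat_trace_mult_comm) auto
  also have "\<dots> = mat_trace (B * (Q * P))" using c by (simp add: assoc_mult_mat)
  also have "\<dots> = mat_trace B" using QP c by simp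
  finally show ?thesis .
qed

lemma ut_pow:
  fixes B :: "'a::comm_ring_1 mat"
  assumes B: "B \<in> carrier_mat n n" and ut: "upper_triangular B"
  shows "upper_triangular (B ^\<^sub>m k) \<and> (\<forall>i<n. (B ^\<^sub>m k) $$ (i,i) = B $$ (i,i) ^ k)"
proof (induction k)
  case 0
  then show ?case using B by auto
next
  case (Suc k)
  let ?X = "B ^\<^sub>m k"
  have X: "?X \<in> carrier_mat n n" using B by auto
  have utX: "\<And>i j. i < n \<Longrightarrow> j < i \<Longrightarrow> ?X $$ (i,j) = 0" using Suc.IH X by auto
  have utB: "\<And>i j. i < n \<Longrightarrow> j < i \<Longrightarrow> B $$ (i,j) = 0" using ut B by auto
  have "upper_triangular (?X * B)"
  proof (rule upper_triangularI)
    fix i j assume ji: "j < i" and i: "i < dim_row (?X * B)"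
    hence i: "i < n" using B by simp
    have "(?X * B) $$ (i,j) = (\<Sum>l<n. ?X $$ (i,l) * B $$ (l,j))"
      using X B i ji by (intro mult_entry[OF X B]) auto
    also have "\<dots> = 0"
    proof (intro sum.neutral ballI)
      fix l assume "l \<in> {..<n}"
      show "?X $$ (i,l) * B $$ (l,j) = 0"
        using utX[OF i, of l] utB[of l j] ji \<open>l \<in> {..<n}\<close> by (cases "l < i") auto
    qed
    finally show "(?X * B) $$ (i,j) = 0" .
  qed
  moreover have "\<forall>i<n. (?X * B) $$ (i,i) = B $$ (i,i) ^ Suc k"
  proof (intro allI impI)
    fix i assume i: "i < n"
    have "(?X * B) $$ (i,i) = (\<Sum>l<n. ?X $$ (i,l) * B $$ (l,i))"
      using X B i by (intro mult_entry[OF X B]) auto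
    also have "\<dots> = ?X $$ (i,i) * B $$ (i,i)"
    proof (rule sum_single[OF i])
      fix l assume "l < n" "l \<noteq> i"
      then show "?X $$ (i,l) * B $$ (l,i) = 0"
        using utX[OF i, of l] utB[of l i] by (cases "l < i") auto
    qed
    also have "\<dots> = B $$ (i,i) ^ Suc k" using Suc.IH i by (simp add: mult.commute)
    finally show "(?X * B) $$ (i,i) = B $$ (i,i) ^ Suc k" .
  qed
  ultimately show ?case by simp
qed

lemma strict_ut_pow:
  assumes N: "N \<in> carrier_mat n n" and st: "\<And>i j. i < n \<Longrightarrow> j < n \<Longrightarrow> j \<le> i \<Longrightarrow> N $$ (i,j) = 0"
  shows "\<And>i j. i < n \<Longrightarrow> j < n \<Longrightarrow> j < i + k \<Longrightarrow> (N ^\<^sub>m k) $$ (i,j) = 0"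
proof (induction k)
  case 0
  then show ?case using N by auto
next
  case (Suc k)
  let ?X = "N ^\<^sub>m k"
  have X: "?X \<in> carrier_mat n n" using N by auto
  have "(?X * N) $$ (i,j) = (\<Sum>l<n. ?X $$ (i,l) * N $$ (l,j))"
    using X N Suc.prems by (intro mult_entry[OF X N]) auto
  also have "\<dots> = 0"
  proof (intro sum.neutral ballI)
    fix l assume l: "l \<in> {..<n}"
    show "?X $$ (i,l) * N $$ (l,j) = 0"
    proof (cases "l < i + k")
      case True then show ?thesis using Suc.IH[of i l] Suc.prems l by auto
    next
      case False then show ?thesis using st[of l j] Suc.prems l by auto
    qed
  qed
  finally show ?case by simp
qed

lemma strict_ut_nilpotent:
  assumes N: "N \<in> carrier_mat n n" and st: "\<And>i j. i < n \<Longrightarrow> j < n \<Longrightarrow> j \<le> i \<Longrightarrow> N $$ (i,j) = 0"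
  shows "N ^\<^sub>m n = 0\<^sub>m n n"
  using strict_ut_pow[OF N st, of _ _ n] N by (intro eq_matI) auto


lemma unipotent_finite_order:
  fixes B :: "complex mat"
  assumes B: "B \<in> carrier_mat n n" and ut: "upper_triangular B"
    and d: "\<forall>i<n. B $$ (i,i) = 1" and m: "m > 0" and Bm: "B ^\<^sub>m m = 1\<^sub>m n"
  shows "B = 1\<^sub>m n"
proof -
  define N where "N = B - 1\<^sub>m n"
  have N: "N \<in> carrier_mat n n" by (simp add: N_def minus_carrier_mat)
  have st: "N $$ (i,j) = 0" if "i < n" "j < n" "j \<le> i" for i j
  proof (cases "j < i")
    case True then show ?thesis using that B ut unfolding N_def by auto
  next
    case False then have "j = i" using that by auto
    then show ?thesis using that B d unfolding N_def by auto
  qed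
  have BN: "B = 1\<^sub>m n + N" by (rule eq_matI) (use B in \<open>auto simp: N_def\<close>)
  have step: "N ^\<^sub>m k = 0\<^sub>m n n" if k: "k \<ge> 1" and Nk: "N ^\<^sub>m Suc k = 0\<^sub>m n n" for k
  proof -
    define U where "U = N ^\<^sub>m (k - 1)"
    define W where "W = N ^\<^sub>m k"
    have U: "U \<in> carrier_mat n n" and W: "W \<in> carrier_mat n n" using N by (auto simp: U_def W_def)
    have UN: "U * N = W" using k unfolding U_def W_def by (cases k) auto
    have WN: "W * N = 0\<^sub>m n n" using Nk by (simp add: W_def)
    have UB: "U * B = U + W" unfolding BN using U N mult_add_distrib_mat[OF U one_carrier_mat N] by (simp add: UN)
    have WB: "W * B = W" unfolding BN using W N mult_add_distrib_mat[OF W one_carrier_mat N] by (simp add: WN)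
    have pow: "U * B ^\<^sub>m j = U + of_nat j \<cdot>\<^sub>m W" for j
    proof (induction j)
      case 0
      show ?case using U W B by (intro eq_matI) auto
    next
      case (Suc j)
      have "U * B ^\<^sub>m Suc j = (U * B ^\<^sub>m j) * B" using U B by (simp add: assoc_mult_mat[of U n n _ n B n])
      also have "\<dots> = (U + of_nat j \<cdot>\<^sub>m W) * B" using Suc.IH by simp
      also have "\<dots> = U * B + (of_nat j \<cdot>\<^sub>m W) * B" using U W B by (simp add: add_mult_distrib_mat)
      also have "\<dots> = U + W + of_nat j \<cdot>\<^sub>m W" using U W B UB WB by (simp add: mult_smult_assoc_mat)
      also have "\<dots> = U + of_nat (Suc j) \<cdot>\<^sub>m W" using U W by (intro eq_matI) (auto simp: algebra_simps)
      finally show ?case .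
    qed
    from pow[of m] Bm U have eq: "U = U + of_nat m \<cdot>\<^sub>m W" by simp
    show ?thesis unfolding W_def[symmetric]
    proof (rule eq_matI)
      fix i j assume ij: "i < dim_row (0\<^sub>m n n :: complex mat)" "j < dim_col (0\<^sub>m n n :: complex mat)"
      have "U $$ (i,j) = (U + of_nat m \<cdot>\<^sub>m W) $$ (i,j)" using arg_cong[where f="\<lambda>M. M $$ (i,j)", OF eq] by simp
      then show "W $$ (i,j) = 0\<^sub>m n n $$ (i,j)" using ij U W m by auto
    qed (use W in auto)
  qed
  have down: "N ^\<^sub>m Suc d = 0\<^sub>m n n \<Longrightarrow> N ^\<^sub>m 1 = 0\<^sub>m n n" for d
  proof (induction d)
    case (Suc d)
    then show ?case using step[of "Suc d"] by simp
  qed simp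
  show ?thesis
  proof (cases "n = 0")
    case True then show ?thesis using B by (intro eq_matI) auto
  next
    case False
    have "N ^\<^sub>m n = 0\<^sub>m n n" by (rule strict_ut_nilpotent[OF N st])
    hence "N ^\<^sub>m Suc (n - 1) = 0\<^sub>m n n" using False by simp
    hence "N ^\<^sub>m 1 = 0\<^sub>m n n" by (rule down)
    hence "N = 0\<^sub>m n n" using N by simp
    then show ?thesis unfolding BN using N by simp
  qed
qed



lemma finite_order_triang:
  fixes A :: "complex mat"
  assumes A: "A \<in> carrier_mat n n" and m: "m > 0" and Am: "A ^\<^sub>m m = 1\<^sub>m n"
  obtains B P Q where "similar_mat_wit A B P Q" "B \<in> carrier_mat n n" "upper_triangular B"
    "\<forall>i<n. B $$ (i,i) ^ m = 1"
proof -
  obtain es where "char_poly A = (\<Prod>a\<leftarrow>es. [:-a,1:])" using char_poly_factorized[OF A] by blast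
  then obtain B where B: "B \<in> carrier_mat n n" "upper_triangular B" "similar_mat A B"
    using schur_decomposition_exists[OF A] by blast
  then obtain P Q where w: "similar_mat_wit A B P Q" unfolding similar_mat_def by blast
  have w2: "similar_mat_wit B A Q P" by (rule similar_mat_wit_sym[OF w])
  from w A have P: "P \<in> carrier_mat n n" and Q: "Q \<in> carrier_mat n n" and QP: "Q * P = 1\<^sub>m n"
    unfolding similar_mat_wit_def Let_def by auto
  have "B ^\<^sub>m m = Q * A ^\<^sub>m m * P" by (rule similar_mat_wit_pow_id[OF w2])
  also have "\<dots> = 1\<^sub>m n" using Am Q P QP by simp
  finally have Bm: "B ^\<^sub>m m = 1\<^sub>m n" .
  have "\<forall>i<n. B $$ (i,i) ^ m = 1"
  proof (intro allI impI)
    fix i assume i: "i < n"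
    have "B $$ (i,i) ^ m = (B ^\<^sub>m m) $$ (i,i)" using ut_pow[OF B(1,2), of m] i by simp
    also have "\<dots> = 1" using Bm i by simp
    finally show "B $$ (i,i) ^ m = 1" .
  qed
  then show ?thesis using that w B by blast
qed

lemma trace_pow_triang:
  fixes A :: "complex mat"
  assumes w: "similar_mat_wit A B P Q" and A: "A \<in> carrier_mat n n" and B: "B \<in> carrier_mat n n"
    and ut: "upper_triangular B"
  shows "mat_trace (A ^\<^sub>m k) = (\<Sum>i<n. B $$ (i,i) ^ k)"
proof -
  have Ak: "A ^\<^sub>m k \<in> carrier_mat n n" using A by simp
  have "mat_trace (A ^\<^sub>m k) = mat_trace (B ^\<^sub>m k)"
    by (rule mat_trace_similar[OF similar_mat_wit_pow[OF w] Ak])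
  also have "\<dots> = (\<Sum>i<n. B $$ (i,i) ^ k)"
    using ut_pow[OF B ut, of k] B by (simp add: mat_trace_eq[of _ n])
  finally show ?thesis .
qed

lemma root_unity_norm:
  fixes z :: complex
  assumes "z ^ m = 1" "m > 0"
  shows "cmod z = 1"
proof -
  have "cmod (z ^ m) = 1" using assms(1) by simp
  hence "cmod z ^ m = 1 ^ m" by (simp add: norm_power)
  then show ?thesis using power_eq_imp_eq_base[of "cmod z" m 1] assms(2) by simp
qed

lemma root_unity_conj:
  fixes z :: complex
  assumes "z ^ m = 1" "m > 0"
  shows "z ^ (m - 1) = cnj z"
proof -
  have n1: "cmod z = 1" by (rule root_unity_norm[OF assms])
  have z0: "z \<noteq> 0" using n1 by auto
  have "z * z ^ (m - 1) = 1" using assms by (cases m) auto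
  moreover have "z * cnj z = 1" using complex_norm_square[of z] n1 by simp
  ultimately have "z * (z ^ (m - 1) - cnj z) = 0" by (simp add: algebra_simps)
  then show ?thesis using z0 by simp
qed

lemma trace_inv_conj:
  fixes A :: "complex mat"
  assumes A: "A \<in> carrier_mat n n" and m: "m > 0" and Am: "A ^\<^sub>m m = 1\<^sub>m n"
  shows "mat_trace (A ^\<^sub>m (m - 1)) = cnj (mat_trace A)"
proof -
  obtain B P Q where w: "similar_mat_wit A B P Q" and B: "B \<in> carrier_mat n n" "upper_triangular B"
    and r: "\<forall>i<n. B $$ (i,i) ^ m = 1"
    using finite_order_triang[OF A m Am] by blast
  have "mat_trace (A ^\<^sub>m (m - 1)) = (\<Sum>i<n. B $$ (i,i) ^ (m - 1))"
    by (rule trace_pow_triang[OF w A B])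
  also have "\<dots> = (\<Sum>i<n. cnj (B $$ (i,i)))" using r m by (intro sum.cong refl root_unity_conj) auto
  also have "\<dots> = cnj (\<Sum>i<n. B $$ (i,i) ^ 1)" by simp
  also have "(\<Sum>i<n. B $$ (i,i) ^ 1) = mat_trace (A ^\<^sub>m 1)"
    by (rule trace_pow_triang[OF w A B, symmetric])
  also have "A ^\<^sub>m 1 = A" using A by simp
  finally show ?thesis .
qed

lemma trace_full_one:
  fixes A :: "complex mat"
  assumes A: "A \<in> carrier_mat n n" and m: "m > 0" and Am: "A ^\<^sub>m m = 1\<^sub>m n"
    and tr: "mat_trace A = of_nat n"
  shows "A = 1\<^sub>m n"
proof -
  obtain B P Q where w: "similar_mat_wit A B P Q" and B: "B \<in> carrier_mat n n" "upper_triangular B"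
    and r: "\<forall>i<n. B $$ (i,i) ^ m = 1"
    using finite_order_triang[OF A m Am] by blast
  from w A have P: "P \<in> carrier_mat n n" and Q: "Q \<in> carrier_mat n n" and PQ: "P * Q = 1\<^sub>m n"
    and AB: "A = P * B * Q"
    unfolding similar_mat_wit_def Let_def by auto
  have nrm: "cmod (B $$ (i,i)) = 1" if "i < n" for i using r that m root_unity_norm by blast
  have "(\<Sum>i<n. B $$ (i,i) ^ 1) = mat_trace (A ^\<^sub>m 1)"
    by (rule trace_pow_triang[OF w A B, symmetric])
  also have "A ^\<^sub>m 1 = A" using A by simp
  finally have s: "(\<Sum>i<n. B $$ (i,i)) = of_nat n" using tr by simp
  have "(\<Sum>i<n. Re (B $$ (i,i))) = Re (\<Sum>i<n. B $$ (i,i))" by (simp add: Re_sum)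
  also have "\<dots> = real n" using s by simp
  finally have "(\<Sum>i<n. Re (B $$ (i,i))) = real n" .
  hence "(\<Sum>i<n. 1 - Re (B $$ (i,i))) = 0" by (simp add: sum_subtractf)
  moreover have "\<forall>i\<in>{..<n}. 0 \<le> 1 - Re (B $$ (i,i))"
  proof
    fix i assume "i \<in> {..<n}"
    then show "0 \<le> 1 - Re (B $$ (i,i))" using nrm[of i] complex_Re_le_cmod[of "B $$ (i,i)"] by simp
  qed
  ultimately have re1: "\<forall>i\<in>{..<n}. Re (B $$ (i,i)) = 1"
    using sum_nonneg_eq_0_iff[of "{..<n}" "\<lambda>i. 1 - Re (B $$ (i,i))"] by auto
  have d1: "\<forall>i<n. B $$ (i,i) = 1"
  proof (intro allI impI)
    fix i assume i: "i < n"
    let ?z = "B $$ (i,i)"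
    have "cmod ?z ^ 2 = Re ?z ^ 2 + Im ?z ^ 2" by (simp add: cmod_power2)
    hence "Im ?z = 0" using nrm[OF i] re1 i by simp
    then show "?z = 1" using re1 i by (simp add: complex_eq_iff)
  qed
  have Bm: "B ^\<^sub>m m = 1\<^sub>m n"
  proof -
    have w2: "similar_mat_wit B A Q P" by (rule similar_mat_wit_sym[OF w])
    have "B ^\<^sub>m m = Q * A ^\<^sub>m m * P" by (rule similar_mat_wit_pow_id[OF w2])
    also have "\<dots> = Q * P" using Am Q P by simp
    also have "\<dots> = 1\<^sub>m n" using w2 unfolding similar_mat_wit_def Let_def using B by auto
    finally show ?thesis .
  qed
  have "B = 1\<^sub>m n" by (rule unipotent_finite_order[OF B d1 m Bm])
  then show ?thesis using AB P Q PQ by simp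
qed



lemma rep_carrier: "is_rep G n \<rho> \<Longrightarrow> g \<in> carrier G \<Longrightarrow> \<rho> g \<in> carrier_mat n n"
  unfolding is_rep_def by auto
lemma rep_one: "is_rep G n \<rho> \<Longrightarrow> \<rho> \<one>\<^bsub>G\<^esub> = 1\<^sub>m n"
  unfolding is_rep_def by auto
lemma rep_mult: "is_rep G n \<rho> \<Longrightarrow> g \<in> carrier G \<Longrightarrow> h \<in> carrier G \<Longrightarrow> \<rho> (g \<otimes>\<^bsub>G\<^esub> h) = \<rho> g * \<rho> h"
  unfolding is_rep_def by auto
lemma rep_pos: "is_rep G n \<rho> \<Longrightarrow> n > 0"
  unfolding is_rep_def by auto

lemma rep_inv_left:
  assumes G: "group G" and r: "is_rep G n \<rho>" and g: "g \<in> carrier G"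
  shows "\<rho> (inv\<^bsub>G\<^esub> g) * \<rho> g = 1\<^sub>m n"
proof -
  interpret G: group G by fact
  have "\<rho> (inv\<^bsub>G\<^esub> g) * \<rho> g = \<rho> (inv\<^bsub>G\<^esub> g \<otimes>\<^bsub>G\<^esub> g)" using rep_mult[OF r G.inv_closed[OF g] g] by simp
  also have "\<dots> = 1\<^sub>m n" using g rep_one[OF r] by simp
  finally show ?thesis .
qed

lemma rep_pow:
  assumes G: "group G" and r: "is_rep G n \<rho>" and g: "g \<in> carrier G"
  shows "\<rho> (g [^]\<^bsub>G\<^esub> (k::nat)) = \<rho> g ^\<^sub>m k"
proof (induction k)
  case 0
  interpret G: group G by fact
  show ?case using rep_one[OF r] rep_carrier[OF r g] by simp
next
  case (Suc k)
  interpret G: group G by fact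
  have "\<rho> (g [^]\<^bsub>G\<^esub> Suc k) = \<rho> (g [^]\<^bsub>G\<^esub> k \<otimes>\<^bsub>G\<^esub> g)" by simp
  also have "\<dots> = \<rho> (g [^]\<^bsub>G\<^esub> k) * \<rho> g" using rep_mult[OF r G.nat_pow_closed[OF g] g] by simp
  finally show ?case using Suc.IH by simp
qed

lemma order_pos: "group G \<Longrightarrow> finite (carrier G) \<Longrightarrow> Coset.order G > 0"
  using monoid.order_gt_0_iff_finite group.is_monoid by blast

lemma rep_order:
  assumes G: "group G" and fin: "finite (carrier G)" and r: "is_rep G n \<rho>" and g: "g \<in> carrier G"
  shows "\<rho> g ^\<^sub>m Coset.order G = 1\<^sub>m n"
  using rep_pow[OF G r g, of "Coset.order G"] group.pow_order_eq_1[OF G g] rep_one[OF r] by simp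

lemma inv_pow:
  assumes G: "group G" and fin: "finite (carrier G)" and g: "g \<in> carrier G"
  shows "inv\<^bsub>G\<^esub> g = g [^]\<^bsub>G\<^esub> (Coset.order G - 1)"
proof -
  interpret G: group G by fact
  have m: "Coset.order G > 0" by (rule order_pos[OF G fin])
  have "g [^]\<^bsub>G\<^esub> (Coset.order G - 1) \<otimes>\<^bsub>G\<^esub> g = g [^]\<^bsub>G\<^esub> Suc (Coset.order G - 1)" by simp
  also have "\<dots> = \<one>\<^bsub>G\<^esub>" using m G.pow_order_eq_1[OF g] by simp
  finally show ?thesis using g by (intro G.inv_equality) auto
qed

lemma char_inv_conj:
  assumes G: "group G" and fin: "finite (carrier G)" and r: "is_rep G n \<rho>" and g: "g \<in> carrier G"
  shows "mat_trace (\<rho> (inv\<^bsub>G\<^esub> g)) = cnj (mat_trace (\<rho> g))"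
proof -
  have "\<rho> (inv\<^bsub>G\<^esub> g) = \<rho> g ^\<^sub>m (Coset.order G - 1)" using inv_pow[OF G fin g] rep_pow[OF G r g] by simp
  then show ?thesis
    using trace_inv_conj[OF rep_carrier[OF r g] order_pos[OF G fin] rep_order[OF G fin r g]] by simp
qed

lemma char_kernel:
  assumes G: "group G" and fin: "finite (carrier G)" and r: "is_rep G n \<rho>" and g: "g \<in> carrier G"
    and tr: "mat_trace (\<rho> g) = of_nat n"
  shows "\<rho> g = 1\<^sub>m n"
  by (rule trace_full_one[OF rep_carrier[OF r g] order_pos[OF G fin] rep_order[OF G fin r g] tr])

lemma schur_lemma:
  assumes irr: "is_irr_rep G n \<rho>" and M: "M \<in> carrier_mat n n"
    and comm: "\<forall>g\<in>carrier G. M * \<rho> g = \<rho> g * M"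
  shows "\<exists>c. M = c \<cdot>\<^sub>m 1\<^sub>m n"
proof -
  have r: "is_rep G n \<rho>" using irr unfolding is_irr_rep_def by auto
  have n: "n > 0" by (rule rep_pos[OF r])
  obtain c where "eigenvalue M c" using spectrum_non_empty[OF M n] unfolding spectrum_def by auto
  then obtain v where v: "v \<in> carrier_vec n" "v \<noteq> 0\<^sub>v n" "M *\<^sub>v v = c \<cdot>\<^sub>v v"
    using M unfolding eigenvalue_def eigenvector_def by auto
  define W where "W = {w \<in> carrier_vec n. M *\<^sub>v w = c \<cdot>\<^sub>v w}"
  have sub: "is_subspace n W"
    unfolding is_subspace_def
  proof (intro conjI ballI allI)
    show "W \<subseteq> carrier_vec n" unfolding W_def by auto
    show "0\<^sub>v n \<in> W" unfolding W_def using M by (auto intro!: eq_vecI)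
  next
    fix x y assume "x \<in> W" "y \<in> W"
    then show "x + y \<in> W" unfolding W_def using M
      by (auto simp: mult_add_distrib_mat_vec smult_add_distrib_vec)
  next
    fix a x assume "x \<in> W"
    then show "a \<cdot>\<^sub>v x \<in> W" unfolding W_def using M
      by (auto simp: mult_mat_vec smult_smult_assoc mult.commute)
  qed
  have inv: "\<forall>g\<in>carrier G. \<forall>w\<in>W. \<rho> g *\<^sub>v w \<in> W"
  proof (intro ballI)
    fix g w assume g: "g \<in> carrier G" and w: "w \<in> W"
    have rg: "\<rho> g \<in> carrier_mat n n" by (rule rep_carrier[OF r g])
    have wc: "w \<in> carrier_vec n" and Mw: "M *\<^sub>v w = c \<cdot>\<^sub>v w" using w unfolding W_def by auto
    have "M *\<^sub>v (\<rho> g *\<^sub>v w) = (M * \<rho> g) *\<^sub>v w" using M rg wc by (simp add: assoc_mult_mat_vec)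
    also have "\<dots> = (\<rho> g * M) *\<^sub>v w" using comm g by simp
    also have "\<dots> = \<rho> g *\<^sub>v (M *\<^sub>v w)" using M rg wc by (simp add: assoc_mult_mat_vec)
    also have "\<dots> = c \<cdot>\<^sub>v (\<rho> g *\<^sub>v w)" using Mw rg wc by (simp add: mult_mat_vec)
    finally show "\<rho> g *\<^sub>v w \<in> W" unfolding W_def using rg wc by auto
  qed
  have "W = {0\<^sub>v n} \<or> W = carrier_vec n" using irr sub inv unfolding is_irr_rep_def by blast
  moreover have "v \<in> W" using v unfolding W_def by auto
  ultimately have Wall: "W = carrier_vec n" using v by auto
  have "M = c \<cdot>\<^sub>m 1\<^sub>m n"
  proof (rule eq_matI)
    fix i j assume i: "i < dim_row (c \<cdot>\<^sub>m 1\<^sub>m n)" and j: "j < dim_col (c \<cdot>\<^sub>m 1\<^sub>m n)"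
    have "unit_vec n j \<in> W" using Wall j by simp
    hence "M *\<^sub>v unit_vec n j = c \<cdot>\<^sub>v unit_vec n j" unfolding W_def by auto
    hence "(M *\<^sub>v unit_vec n j) $ i = (c \<cdot>\<^sub>v unit_vec n j) $ i" by simp
    then show "M $$ (i,j) = (c \<cdot>\<^sub>m 1\<^sub>m n) $$ (i,j)" using i j M
      by (simp add: scalar_prod_right_unit)
  qed (use M in auto)
  then show ?thesis by blast
qed



lemma sum_swap_mult:
  fixes a :: "'g \<Rightarrow> complex"
  shows "(\<Sum>b<n. (\<Sum>g\<in>C. a g * c g b) * d b) = (\<Sum>g\<in>C. a g * (\<Sum>b<n. c g b * d b))"
proof -
  have "(\<Sum>b<n. (\<Sum>g\<in>C. a g * c g b) * d b) = (\<Sum>b<n. \<Sum>g\<in>C. a g * (c g b * d b))"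
    by (simp add: sum_distrib_right mult.assoc)
  also have "\<dots> = (\<Sum>g\<in>C. \<Sum>b<n. a g * (c g b * d b))" by (rule sum.swap)
  also have "\<dots> = (\<Sum>g\<in>C. a g * (\<Sum>b<n. c g b * d b))" by (simp add: sum_distrib_left)
  finally show ?thesis .
qed

lemma sum_swap_mult2:
  fixes a :: "'g \<Rightarrow> nat \<Rightarrow> complex"
  shows "(\<Sum>b<n. e b * (\<Sum>g\<in>C. a g b * d g)) = (\<Sum>g\<in>C. (\<Sum>b<n. e b * a g b) * d g)"
proof -
  have "(\<Sum>b<n. e b * (\<Sum>g\<in>C. a g b * d g)) = (\<Sum>b<n. \<Sum>g\<in>C. e b * a g b * d g)"
    by (simp add: sum_distrib_left mult.assoc)
  also have "\<dots> = (\<Sum>g\<in>C. \<Sum>b<n. e b * a g b * d g)" by (rule sum.swap)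
  also have "\<dots> = (\<Sum>g\<in>C. (\<Sum>b<n. e b * a g b) * d g)" by (simp add: sum_distrib_right)
  finally show ?thesis .
qed

lemma orth_entry:
  assumes G: "group G" and fin: "finite (carrier G)" and irr: "is_irr_rep G n \<rho>"
    and j: "j < n" and k: "k < n"
  shows "\<forall>i<n. \<forall>l<n. (\<Sum>g\<in>carrier G. \<rho> g $$ (i,j) * \<rho> (inv\<^bsub>G\<^esub> g) $$ (k,l))
      = (if k = j \<and> i = l then of_nat (card (carrier G)) / of_nat n else 0)"
proof -
  interpret G: group G by fact
  have r: "is_rep G n \<rho>" using irr unfolding is_irr_rep_def by auto
  have n: "n > 0" by (rule rep_pos[OF r])
  have rc: "\<And>g. g \<in> carrier G \<Longrightarrow> \<rho> g \<in> carrier_mat n n" by (rule rep_carrier[OF r])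
  define T where "T = mat n n (\<lambda>(i,l). \<Sum>g\<in>carrier G. \<rho> g $$ (i,j) * \<rho> (inv\<^bsub>G\<^esub> g) $$ (k,l))"
  have T: "T \<in> carrier_mat n n" unfolding T_def by simp
  have comm: "\<forall>h\<in>carrier G. T * \<rho> h = \<rho> h * T"
  proof
    fix h assume h: "h \<in> carrier G"
    have rh: "\<rho> h \<in> carrier_mat n n" by (rule rc[OF h])
    show "T * \<rho> h = \<rho> h * T"
    proof (rule eq_matI)
      fix i l assume i: "i < dim_row (\<rho> h * T)" and l: "l < dim_col (\<rho> h * T)"
      hence i: "i < n" and l: "l < n" using rh T by auto
      have "(T * \<rho> h) $$ (i,l) = (\<Sum>b<n. T $$ (i,b) * \<rho> h $$ (b,l))"
        by (rule mult_entry[OF T rh i l])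
      also have "\<dots> = (\<Sum>b<n. (\<Sum>g\<in>carrier G. \<rho> g $$ (i,j) * \<rho> (inv\<^bsub>G\<^esub> g) $$ (k,b)) * \<rho> h $$ (b,l))"
        unfolding T_def using i by simp
      also have "\<dots> = (\<Sum>g\<in>carrier G. \<rho> g $$ (i,j) * (\<Sum>b<n. \<rho> (inv\<^bsub>G\<^esub> g) $$ (k,b) * \<rho> h $$ (b,l)))"
        by (rule sum_swap_mult)
      also have "\<dots> = (\<Sum>g\<in>carrier G. \<rho> g $$ (i,j) * \<rho> (inv\<^bsub>G\<^esub> g \<otimes>\<^bsub>G\<^esub> h) $$ (k,l))"
      proof (rule sum.cong[OF refl])
        fix g assume g: "g \<in> carrier G"
        have "\<rho> (inv\<^bsub>G\<^esub> g \<otimes>\<^bsub>G\<^esub> h) $$ (k,l) = (\<rho> (inv\<^bsub>G\<^esub> g) * \<rho> h) $$ (k,l)"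
          using rep_mult[OF r _ h] g by simp
        also have "\<dots> = (\<Sum>b<n. \<rho> (inv\<^bsub>G\<^esub> g) $$ (k,b) * \<rho> h $$ (b,l))"
          by (rule mult_entry[OF rc[OF G.inv_closed[OF g]] rh k l])
        finally show "\<rho> g $$ (i,j) * (\<Sum>b<n. \<rho> (inv\<^bsub>G\<^esub> g) $$ (k,b) * \<rho> h $$ (b,l))
            = \<rho> g $$ (i,j) * \<rho> (inv\<^bsub>G\<^esub> g \<otimes>\<^bsub>G\<^esub> h) $$ (k,l)" by simp
      qed
      also have "\<dots> = (\<Sum>g\<in>carrier G. \<rho> (h \<otimes>\<^bsub>G\<^esub> g) $$ (i,j) * \<rho> (inv\<^bsub>G\<^esub> (h \<otimes>\<^bsub>G\<^esub> g) \<otimes>\<^bsub>G\<^esub> h) $$ (k,l))"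
      proof -
        have "(\<Sum>g\<in>carrier G. \<rho> g $$ (i,j) * \<rho> (inv\<^bsub>G\<^esub> g \<otimes>\<^bsub>G\<^esub> h) $$ (k,l))
          = (\<Sum>g\<in>(\<otimes>\<^bsub>G\<^esub>) h ` carrier G. \<rho> g $$ (i,j) * \<rho> (inv\<^bsub>G\<^esub> g \<otimes>\<^bsub>G\<^esub> h) $$ (k,l))"
          using G.surj_const_mult[OF h] by simp
        also have "\<dots> = (\<Sum>g\<in>carrier G. \<rho> (h \<otimes>\<^bsub>G\<^esub> g) $$ (i,j) * \<rho> (inv\<^bsub>G\<^esub> (h \<otimes>\<^bsub>G\<^esub> g) \<otimes>\<^bsub>G\<^esub> h) $$ (k,l))"
          by (subst sum.reindex[OF G.inj_on_cmult[OF h]]) simp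
        finally show ?thesis .
      qed
      also have "\<dots> = (\<Sum>g\<in>carrier G. \<rho> (h \<otimes>\<^bsub>G\<^esub> g) $$ (i,j) * \<rho> (inv\<^bsub>G\<^esub> g) $$ (k,l))"
      proof (rule sum.cong[OF refl])
        fix g assume g: "g \<in> carrier G"
        have "inv\<^bsub>G\<^esub> (h \<otimes>\<^bsub>G\<^esub> g) \<otimes>\<^bsub>G\<^esub> h = inv\<^bsub>G\<^esub> g"
          using g h by (simp add: G.inv_mult_group G.m_assoc)
        then show "\<rho> (h \<otimes>\<^bsub>G\<^esub> g) $$ (i,j) * \<rho> (inv\<^bsub>G\<^esub> (h \<otimes>\<^bsub>G\<^esub> g) \<otimes>\<^bsub>G\<^esub> h) $$ (k,l)
          = \<rho> (h \<otimes>\<^bsub>G\<^esub> g) $$ (i,j) * \<rho> (inv\<^bsub>G\<^esub> g) $$ (k,l)" by simp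
      qed
      also have "\<dots> = (\<Sum>g\<in>carrier G. (\<Sum>a<n. \<rho> h $$ (i,a) * \<rho> g $$ (a,j)) * \<rho> (inv\<^bsub>G\<^esub> g) $$ (k,l))"
      proof (rule sum.cong[OF refl])
        fix g assume g: "g \<in> carrier G"
        have "\<rho> (h \<otimes>\<^bsub>G\<^esub> g) $$ (i,j) = (\<rho> h * \<rho> g) $$ (i,j)" using rep_mult[OF r h g] by simp
        also have "\<dots> = (\<Sum>a<n. \<rho> h $$ (i,a) * \<rho> g $$ (a,j))" by (rule mult_entry[OF rh rc[OF g] i j])
        finally show "\<rho> (h \<otimes>\<^bsub>G\<^esub> g) $$ (i,j) * \<rho> (inv\<^bsub>G\<^esub> g) $$ (k,l)
          = (\<Sum>a<n. \<rho> h $$ (i,a) * \<rho> g $$ (a,j)) * \<rho> (inv\<^bsub>G\<^esub> g) $$ (k,l)" by simp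
      qed
      also have "\<dots> = (\<Sum>a<n. \<rho> h $$ (i,a) * (\<Sum>g\<in>carrier G. \<rho> g $$ (a,j) * \<rho> (inv\<^bsub>G\<^esub> g) $$ (k,l)))"
        by (rule sum_swap_mult2[symmetric])
      also have "\<dots> = (\<Sum>a<n. \<rho> h $$ (i,a) * T $$ (a,l))"
        unfolding T_def using l by simp
      also have "\<dots> = (\<rho> h * T) $$ (i,l)" by (rule mult_entry[OF rh T i l, symmetric])
      finally show "(T * \<rho> h) $$ (i,l) = (\<rho> h * T) $$ (i,l)" .
    qed (use rh T in auto)
  qed
  obtain c where Tc: "T = c \<cdot>\<^sub>m 1\<^sub>m n" using schur_lemma[OF irr T] comm by metis
  have "(\<Sum>i<n. T $$ (i,i)) = (\<Sum>i<n. \<Sum>g\<in>carrier G. \<rho> g $$ (i,j) * \<rho> (inv\<^bsub>G\<^esub> g) $$ (k,i))"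
    unfolding T_def by simp
  also have "\<dots> = (\<Sum>g\<in>carrier G. \<Sum>i<n. \<rho> (inv\<^bsub>G\<^esub> g) $$ (k,i) * \<rho> g $$ (i,j))"
    by (subst sum.swap) (simp add: mult.commute)
  also have "\<dots> = (\<Sum>g\<in>carrier G. (\<rho> (inv\<^bsub>G\<^esub> g) * \<rho> g) $$ (k,j))"
    by (rule sum.cong[OF refl], rule mult_entry[symmetric, OF rc rc k j]) auto
  also have "\<dots> = (\<Sum>g\<in>carrier G. (1\<^sub>m n :: complex mat) $$ (k,j))"
    by (rule sum.cong[OF refl]) (simp add: rep_inv_left[OF G r])
  also have "\<dots> = of_nat (card (carrier G)) * (if k = j then 1 else 0)" using j k by simp
  finally have tr1: "(\<Sum>i<n. T $$ (i,i)) = of_nat (card (carrier G)) * (if k = j then 1 else 0)" .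
  have "(\<Sum>i<n. T $$ (i,i)) = of_nat n * c" unfolding Tc by simp
  with tr1 have c: "c = of_nat (card (carrier G)) * (if k = j then 1 else 0) / of_nat n"
    using n by (simp add: field_simps)
  show ?thesis
  proof (intro allI impI)
    fix i l assume i: "i < n" and l: "l < n"
    have "(\<Sum>g\<in>carrier G. \<rho> g $$ (i,j) * \<rho> (inv\<^bsub>G\<^esub> g) $$ (k,l)) = T $$ (i,l)"
      unfolding T_def using i l by simp
    also have "\<dots> = (if i = l then c else 0)" unfolding Tc using i l by simp
    finally show "(\<Sum>g\<in>carrier G. \<rho> g $$ (i,j) * \<rho> (inv\<^bsub>G\<^esub> g) $$ (k,l))
      = (if k = j \<and> i = l then of_nat (card (carrier G)) / of_nat n else 0)"
      using c by auto
  qed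
qed

lemma orth_char:
  assumes G: "group G" and fin: "finite (carrier G)" and irr: "is_irr_rep G n \<rho>"
  shows "(\<Sum>g\<in>carrier G. mat_trace (\<rho> g) * mat_trace (\<rho> (inv\<^bsub>G\<^esub> g))) = of_nat (card (carrier G))"
proof -
  interpret G: group G by fact
  have r: "is_rep G n \<rho>" using irr unfolding is_irr_rep_def by auto
  have n: "n > 0" by (rule rep_pos[OF r])
  have rc: "\<And>g. g \<in> carrier G \<Longrightarrow> \<rho> g \<in> carrier_mat n n" by (rule rep_carrier[OF r])
  have "(\<Sum>g\<in>carrier G. mat_trace (\<rho> g) * mat_trace (\<rho> (inv\<^bsub>G\<^esub> g)))
     = (\<Sum>g\<in>carrier G. (\<Sum>i<n. \<rho> g $$ (i,i)) * (\<Sum>k<n. \<rho> (inv\<^bsub>G\<^esub> g) $$ (k,k)))"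
    by (rule sum.cong[OF refl]) (simp add: mat_trace_eq[OF rc])
  also have "\<dots> = (\<Sum>g\<in>carrier G. \<Sum>k<n. \<Sum>i<n. \<rho> g $$ (i,i) * \<rho> (inv\<^bsub>G\<^esub> g) $$ (k,k))"
    by (simp add: sum_distrib_left sum_distrib_right)
  also have "\<dots> = (\<Sum>k<n. \<Sum>i<n. \<Sum>g\<in>carrier G. \<rho> g $$ (i,i) * \<rho> (inv\<^bsub>G\<^esub> g) $$ (k,k))"
    by (subst sum.swap, rule sum.cong[OF refl], rule sum.swap)
  also have "\<dots> = (\<Sum>k<n. \<Sum>i<n. (if i = k then of_nat (card (carrier G)) / of_nat n else 0))"
    using orth_entry[OF G fin irr] by (intro sum.cong refl) auto
  also have "\<dots> = (\<Sum>k<n. of_nat (card (carrier G)) / of_nat n)" by simp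
  also have "\<dots> = of_nat (card (carrier G))" using n by simp
  finally show ?thesis .
qed



lemma char_one:
  assumes G: "group G" and r: "is_rep G n \<rho>"
  shows "(\<lambda>g\<in>carrier G. mat_trace (\<rho> g)) \<one>\<^bsub>G\<^esub> = of_nat n"
  using rep_one[OF r] group.is_monoid[OF G] monoid.one_closed by (simp add: mat_trace_one)

lemma trivial_irr:
  assumes G: "group G"
  shows "is_irr_rep G 1 (\<lambda>g. 1\<^sub>m 1)"
  unfolding is_irr_rep_def
proof (intro conjI allI impI)
  show "is_rep G 1 (\<lambda>g. 1\<^sub>m 1)" unfolding is_rep_def by simp
  fix W assume A: "is_subspace 1 W \<and> (\<forall>g\<in>carrier G. \<forall>w\<in>W. 1\<^sub>m 1 *\<^sub>v w \<in> W)"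
  hence Wc: "W \<subseteq> carrier_vec 1" and W0: "0\<^sub>v 1 \<in> W" and Ws: "\<And>c v. v \<in> W \<Longrightarrow> c \<cdot>\<^sub>v v \<in> W"
    unfolding is_subspace_def by auto
  show "W = {0\<^sub>v 1} \<or> W = carrier_vec 1"
  proof (cases "W \<subseteq> {0\<^sub>v 1}")
    case True then show ?thesis using W0 by auto
  next
    case False
    then obtain w where w: "w \<in> W" "w \<noteq> 0\<^sub>v 1" by auto
    have wc: "w \<in> carrier_vec 1" using w Wc by auto
    have w0: "w $ 0 \<noteq> 0"
    proof
      assume "w $ 0 = 0"
      hence "w = 0\<^sub>v 1" using wc by (intro eq_vecI) auto
      then show False using w by simp
    qed
    have "carrier_vec 1 \<subseteq> W"
    proof
      fix v :: "complex vec" assume v: "v \<in> carrier_vec 1"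
      have "v = (v $ 0 / w $ 0) \<cdot>\<^sub>v w" using v wc w0 by (intro eq_vecI) auto
      then show "v \<in> W" using Ws[OF w(1)] by metis
    qed
    then show ?thesis using Wc by auto
  qed
qed

lemma one_in_cd:
  assumes G: "group G"
  shows "1 \<in> cd G"
proof -
  have "(\<lambda>g\<in>carrier G. mat_trace ((\<lambda>g. 1\<^sub>m 1) g)) \<in> Irr G"
    unfolding Irr_def using trivial_irr[OF G] by blast
  moreover have "(\<lambda>g\<in>carrier G. mat_trace ((\<lambda>g. 1\<^sub>m 1 :: complex mat) g)) \<one>\<^bsub>G\<^esub> = 1"
    using char_one[OF G is_irr_rep_def[THEN iffD1, OF trivial_irr[OF G], THEN conjunct1]] by simp
  ultimately show ?thesis unfolding cd_def by (metis (mono_tags, lifting) mem_Collect_eq)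
qed

lemma GVZ_card:
  assumes G: "group G" and fin: "finite (carrier G)" and gvz: "GVZ G"
    and irr: "is_irr_rep G n \<rho>" and chi: "\<chi> = (\<lambda>g\<in>carrier G. mat_trace (\<rho> g))"
  shows "card (Zchar G \<chi>) * n ^ 2 = card (carrier G)"
proof -
  interpret G: group G by fact
  have r: "is_rep G n \<rho>" using irr unfolding is_irr_rep_def by auto
  have chiIrr: "\<chi> \<in> Irr G" unfolding Irr_def chi using irr by blast
  have chi1: "\<chi> \<one>\<^bsub>G\<^esub> = of_nat n" unfolding chi by (rule char_one[OF G r])
  define Z where "Z = Zchar G \<chi>"
  have Zsub: "Z \<subseteq> carrier G" unfolding Z_def Zchar_def by auto
  have trm: "mat_trace (\<rho> g) * mat_trace (\<rho> (inv\<^bsub>G\<^esub> g)) = complex_of_real ((cmod (\<chi> g))\<^sup>2)"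
    if g: "g \<in> carrier G" for g
    using char_inv_conj[OF G fin r g] complex_norm_square[of "mat_trace (\<rho> g)"] g unfolding chi by simp
  have "of_nat (card (carrier G)) = (\<Sum>g\<in>carrier G. mat_trace (\<rho> g) * mat_trace (\<rho> (inv\<^bsub>G\<^esub> g)))"
    by (rule orth_char[OF G fin irr, symmetric])
  also have "\<dots> = (\<Sum>g\<in>carrier G. (if g \<in> Z then of_nat (n ^ 2) else 0))"
  proof (rule sum.cong[OF refl])
    fix g assume g: "g \<in> carrier G"
    show "mat_trace (\<rho> g) * mat_trace (\<rho> (inv\<^bsub>G\<^esub> g)) = (if g \<in> Z then of_nat (n ^ 2) else 0)"
    proof (cases "g \<in> Z")
      case True
      hence "cmod (\<chi> g) = real n" unfolding Z_def Zchar_def chi1 by simp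
      then show ?thesis using trm[OF g] True by simp
    next
      case False
      hence "\<chi> g = 0" using gvz chiIrr g unfolding GVZ_def Z_def by auto
      then show ?thesis using trm[OF g] False by simp
    qed
  qed
  also have "\<dots> = of_nat (card Z * n ^ 2)"
    using Zsub fin by (simp add: sum.If_cases Int_absorb1)
  finally show ?thesis unfolding Z_def by (simp only: of_nat_eq_iff)
qed

lemma smult_one_pow: "(c \<cdot>\<^sub>m 1\<^sub>m n :: complex mat) ^\<^sub>m k = (c ^ k) \<cdot>\<^sub>m 1\<^sub>m n"
proof (induction k)
  case 0 then show ?case by (intro eq_matI) auto
next
  case (Suc k)
  then show ?case by (intro eq_matI) (auto simp: mult_entry[of _ n n] sum_single)
qed

lemma comm_helper:
  assumes G: "group G" and g: "g \<in> carrier G" and x: "x \<in> carrier G"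
  shows "x \<otimes>\<^bsub>G\<^esub> g \<otimes>\<^bsub>G\<^esub> (inv\<^bsub>G\<^esub> g \<otimes>\<^bsub>G\<^esub> inv\<^bsub>G\<^esub> x \<otimes>\<^bsub>G\<^esub> g \<otimes>\<^bsub>G\<^esub> x) = g \<otimes>\<^bsub>G\<^esub> x"
proof -
  interpret G: group G by fact
  have h: "\<And>a y. a \<in> carrier G \<Longrightarrow> y \<in> carrier G \<Longrightarrow> a \<otimes>\<^bsub>G\<^esub> (inv\<^bsub>G\<^esub> a \<otimes>\<^bsub>G\<^esub> y) = y"
    by (simp add: G.m_assoc[symmetric])
  show ?thesis using g x by (simp add: G.m_assoc h)
qed



theorem mainTheorem6:
  fixes G :: "('g, 'b) monoid_scheme" and \<phi> \<chi> :: "'g \<Rightarrow> complex"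
  assumes "group G" and "finite (carrier G)" and "GVZ G" and "card (cd G) = 2"
    and "\<phi> \<in> nl G" and "\<chi> \<in> nl G"
    and "comm_subgroup G (Zchar G \<phi>) (carrier G) \<subseteq> ker_char G \<chi>"
  shows "Zchar G \<phi> = Zchar G \<chi>"
proof -
  note G = assms(1) and fin = assms(2) and gvz = assms(3) and cd2 = assms(4)
  interpret G: group G by fact
  obtain n1 \<rho>1 where irr1: "is_irr_rep G n1 \<rho>1" and phi: "\<phi> = (\<lambda>g\<in>carrier G. mat_trace (\<rho>1 g))"
    using assms(5) unfolding nl_def Irr_def by blast
  obtain n2 \<rho>2 where irr2: "is_irr_rep G n2 \<rho>2" and chi: "\<chi> = (\<lambda>g\<in>carrier G. mat_trace (\<rho>2 g))"
    using assms(6) unfolding nl_def Irr_def by blast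
  have r1: "is_rep G n1 \<rho>1" and r2: "is_rep G n2 \<rho>2" using irr1 irr2 unfolding is_irr_rep_def by auto
  have n2pos: "n2 > 0" by (rule rep_pos[OF r2])
  have phi1: "\<phi> \<one>\<^bsub>G\<^esub> = of_nat n1" unfolding phi by (rule char_one[OF G r1])
  have chi1: "\<chi> \<one>\<^bsub>G\<^esub> = of_nat n2" unfolding chi by (rule char_one[OF G r2])
  have ne1: "(of_nat n1 :: complex) \<noteq> 1" using assms(5) phi1 unfolding nl_def by auto
  have ne2: "(of_nat n2 :: complex) \<noteq> 1" using assms(6) chi1 unfolding nl_def by auto
  have in1: "(of_nat n1 :: complex) \<in> cd G"
  proof -
    have "\<phi> \<in> Irr G" using assms(5) unfolding nl_def by auto
    then show ?thesis unfolding cd_def phi1[symmetric] by blast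
  qed
  have in2: "(of_nat n2 :: complex) \<in> cd G"
  proof -
    have "\<chi> \<in> Irr G" using assms(6) unfolding nl_def by auto
    then show ?thesis unfolding cd_def chi1[symmetric] by blast
  qed
  have fincd: "finite (cd G)" using cd2 card.infinite by fastforce
  have neq: "n1 = n2"
  proof (rule ccontr)
    assume "n1 \<noteq> n2"
    hence "(of_nat n1 :: complex) \<noteq> of_nat n2" by simp
    hence "card {1, of_nat n1 :: complex, of_nat n2} = 3" using ne1 ne2 by auto
    moreover have "card {1, of_nat n1 :: complex, of_nat n2} \<le> card (cd G)"
      using in1 in2 one_in_cd[OF G] fincd by (intro card_mono) auto
    ultimately show False using cd2 by simp
  qed
  have sub: "Zchar G \<phi> \<subseteq> Zchar G \<chi>"
  proof
    fix g assume gZ: "g \<in> Zchar G \<phi>"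
    hence g: "g \<in> carrier G" unfolding Zchar_def by auto
    have rg: "\<rho>2 g \<in> carrier_mat n2 n2" by (rule rep_carrier[OF r2 g])
    have comm: "\<forall>x\<in>carrier G. \<rho>2 g * \<rho>2 x = \<rho>2 x * \<rho>2 g"
    proof
      fix x assume x: "x \<in> carrier G"
      define c where "c = inv\<^bsub>G\<^esub> g \<otimes>\<^bsub>G\<^esub> inv\<^bsub>G\<^esub> x \<otimes>\<^bsub>G\<^esub> g \<otimes>\<^bsub>G\<^esub> x"
      have cc: "c \<in> carrier G" unfolding c_def using g x by simp
      have "c \<in> comm_subgroup G (Zchar G \<phi>) (carrier G)"
        unfolding comm_subgroup_def c_def by (rule generate.incl) (use gZ x in blast)
      hence "c \<in> ker_char G \<chi>" using assms(7) by blast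
      hence "\<chi> c = \<chi> \<one>\<^bsub>G\<^esub>" unfolding ker_char_def by auto
      hence "mat_trace (\<rho>2 c) = of_nat n2" using chi1 cc unfolding chi by simp
      hence rc: "\<rho>2 c = 1\<^sub>m n2" by (rule char_kernel[OF G fin r2 cc])
      have "\<rho>2 g * \<rho>2 x = \<rho>2 (g \<otimes>\<^bsub>G\<^esub> x)" using rep_mult[OF r2 g x] by simp
      also have "\<dots> = \<rho>2 (x \<otimes>\<^bsub>G\<^esub> g \<otimes>\<^bsub>G\<^esub> c)" unfolding c_def using comm_helper[OF G g x] by simp
      also have "\<dots> = \<rho>2 x * \<rho>2 g * \<rho>2 c" using rep_mult[OF r2] g x cc by simp
      also have "\<dots> = \<rho>2 x * \<rho>2 g" using rc rep_carrier[OF r2 x] rg by simp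
      finally show "\<rho>2 g * \<rho>2 x = \<rho>2 x * \<rho>2 g" .
    qed
    obtain \<mu> where mu: "\<rho>2 g = \<mu> \<cdot>\<^sub>m 1\<^sub>m n2" using schur_lemma[OF irr2 rg] comm by metis
    have "(\<mu> ^ Coset.order G) \<cdot>\<^sub>m (1\<^sub>m n2 :: complex mat) = 1\<^sub>m n2"
      using rep_order[OF G fin r2 g] unfolding mu smult_one_pow .
    hence "(\<mu> ^ Coset.order G \<cdot>\<^sub>m (1\<^sub>m n2 :: complex mat)) $$ (0,0) = (1\<^sub>m n2 :: complex mat) $$ (0,0)" by simp
    hence "\<mu> ^ Coset.order G = 1" using n2pos by simp
    hence nmu: "cmod \<mu> = 1" using root_unity_norm order_pos[OF G fin] by blast
    have "mat_trace (\<rho>2 g) = of_nat n2 * \<mu>" unfolding mu by (simp add: mat_trace_def)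
    hence "cmod (\<chi> g) = real n2" using g nmu unfolding chi by (simp add: norm_mult)
    then show "g \<in> Zchar G \<chi>" using g chi1 unfolding Zchar_def by simp
  qed
  have c1: "card (Zchar G \<phi>) * n1 ^ 2 = card (carrier G)" by (rule GVZ_card[OF G fin gvz irr1 phi])
  have c2: "card (Zchar G \<chi>) * n2 ^ 2 = card (carrier G)" by (rule GVZ_card[OF G fin gvz irr2 chi])
  have "card (Zchar G \<phi>) * n2 ^ 2 = card (Zchar G \<chi>) * n2 ^ 2" using c1 c2 neq by simp
  hence "card (Zchar G \<phi>) = card (Zchar G \<chi>)" using n2pos by simp
  moreover have "finite (Zchar G \<chi>)" using fin unfolding Zchar_def by auto
  ultimately show ?thesis using sub card_subset_eq by blast
qed

end
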